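(* Let $n$ be even and $f:\mathbb{F}_{2^n}\to\mathbb{F}_{2^n}$ be an APN map with $f(0)=0$ such that every $y\in\mathrm{Im}(f)\setminus\{0\}$ has at least 3 preimages. Then $f$ is almost-3-to-1.
   Context: $f$ is APN if for every $a\neq 0$ and every $b$ the equation $f(x+a)+f(x)=b$ has at most 2 solutions. $f$ is almost-3-to-1 if there is a unique element of $\mathrm{Im}(f)$ with exactly one preimage and every other element of $\mathrm{Im}(f)$ has exactly 3 preimages. *)

theory Defs
  imports Main
begin

definition APN :: "('a::{finite,field} \<Rightarrow> 'a) \<Rightarrow> bool" where
  "APN f \<longleftrightarrow> (\<forall>a b. a \<noteq> 0 \<longrightarrow> card {x. f (x + a) + f x = b} \<le> 2)"

definition almost_3_to_1 :: "('a::finite \<Rightarrow> 'b) \<Rightarrow> bool" where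
  "almost_3_to_1 f \<longleftrightarrow>
     (\<exists>!y. y \<in> range f \<and> card (f -` {y}) = 1) \<and>
     (\<forall>y \<in> range f. card (f -` {y}) \<noteq> 1 \<longrightarrow> card (f -` {y}) = 3)"

end

theory Submission imports Defs begin
lemma even_card_inv:
  fixes S :: "'a::ab_group_add set"
  shows "finite S \<Longrightarrow> (\<forall>x\<in>S. -x \<in> S \<and> -x \<noteq> x) \<Longrightarrow> even (card S)"
proof (induction "card S" arbitrary: S rule: less_induct)
  case less
  show ?case
  proof (cases "S = {}")
    case True then show ?thesis by simp
  next
    case False
    then obtain x where x: "x \<in> S" by blast
    let ?B = "{x, -x}"
    have B: "?B \<subseteq> S" "card ?B = 2" using x less.prems by auto
    have le: "card ?B \<le> card S" using B less.prems by (intro card_mono) auto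
    have cT: "card S = card (S - ?B) + 2"
      using card_Diff_subset[of ?B S] B le less.prems by simp
    have fin: "finite (S - ?B)" using less.prems by simp
    have "even (card (S - ?B))"
      apply (rule less.hyps)
      using cT fin less.prems by auto
    then show ?thesis using cT by simp
  qed
qed
lemma card_pred_sum: "finite (UNIV::'a set) \<Longrightarrow> card {a::'a. P a} = (\<Sum>a\<in>UNIV. if P a then 1 else 0)"
  by (simp add: sum.If_cases)

lemma mod3: "(2::nat)^(2*k) mod 3 = 1"
proof (induction k)
  case (Suc k)
  have "(2::nat)^(2*Suc k) = 4 * 2^(2*k)" by (simp add: power_add)
  then show ?case using Suc by (simp add: mod_mult_right_eq[symmetric])
qed simp
lemma char2:
  fixes n :: nat
  assumes "card (UNIV :: 'a::{finite,field} set) = 2 ^ n" "even n"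
  shows "(1::'a) + 1 = 0"
proof (rule ccontr)
  assume h: "(1::'a) + 1 \<noteq> 0"
  have fix0: "\<And>x::'a. -x = x \<Longrightarrow> x = 0"
  proof -
    fix x :: 'a assume "-x = x"
    then have "(1+1) * x = 0" by (simp add: distrib_right)
    then show "x = 0" using h by simp
  qed
  have "even (card (UNIV - {0::'a}))"
  proof (rule even_card_inv)
    show "finite (UNIV - {0::'a})" by simp
    show "\<forall>x\<in>UNIV - {0::'a}. - x \<in> UNIV - {0} \<and> - x \<noteq> x"
    proof
      fix x :: 'a assume "x \<in> UNIV - {0}"
      then have x0: "x \<noteq> 0" by simp
      have "- x \<noteq> x" using fix0[of x] x0 by blast
      then show "- x \<in> UNIV - {0} \<and> - x \<noteq> x" using x0 by simp
    qed
  qed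
  moreover have "card (UNIV - {0::'a}) = card (UNIV::'a set) - 1" by (simp add: card_Diff_singleton)
  moreover have "n \<noteq> 0"
  proof
    assume "n = 0"
    then have "card (UNIV::'a set) = 1" using assms by simp
    then obtain z where "(UNIV::'a set) = {z}" using card_1_singletonE by blast
    then show False by (metis UNIV_I singletonD zero_neq_one)
  qed
  ultimately show False using assms(1) by (simp add: card_Diff_singleton)
qed


theorem proposition4p7:
  fixes f :: "'a::{finite,field} \<Rightarrow> 'a" and n :: nat
  assumes "card (UNIV :: 'a set) = 2 ^ n"
    and "even n"
    and "APN f"
    and "f 0 = 0"
    and "\<forall>y \<in> range f - {0}. card (f -` {y}) \<ge> 3"
  shows "almost_3_to_1 f"
proof -
  have c2: "(1::'a) + 1 = 0" using char2 assms(1,2) by blast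
  have dbl: "\<And>x::'a. x + x = 0"
  proof -
    fix x :: 'a
    have "x + x = (1+1)*x" by (simp add: distrib_right)
    then show "x + x = 0" using c2 by simp
  qed
  have eqiff: "\<And>u v::'a. u = v \<longleftrightarrow> u + v = 0"
  proof
    fix u v :: 'a
    show "u = v \<Longrightarrow> u + v = 0" using dbl by simp
    assume "u + v = 0"
    then have "u + v + v = v" by simp
    then show "u = v" using dbl by (simp add: add.assoc)
  qed
  define N where "N y = card (f -` {y})" for y
  define Q where "Q = card (UNIV :: 'a set)"
  define R where "R = range f"
  have finR: "finite R" unfolding R_def by simp
  have fib: "\<And>x. card {a. a \<noteq> 0 \<and> f (x + a) = f x} = N (f x) - 1"
  proof -
    fix x :: 'a
    have "(\<lambda>a. x + a) ` {a. a \<noteq> 0 \<and> f (x + a) = f x} = f -` {f x} - {x}"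
    proof (intro equalityI subsetI)
      fix z assume "z \<in> f -` {f x} - {x}"
      then show "z \<in> (\<lambda>a. x + a) ` {a. a \<noteq> 0 \<and> f (x + a) = f x}"
        by (intro image_eqI[where x="z - x"]) auto
    next
      fix z assume "z \<in> (\<lambda>a. x + a) ` {a. a \<noteq> 0 \<and> f (x + a) = f x}"
      then show "z \<in> f -` {f x} - {x}" by auto
    qed
    moreover have "inj_on (\<lambda>a. x + a) {a. a \<noteq> 0 \<and> f (x + a) = f x}"
      by (auto simp: inj_on_def)
    ultimately have "card {a. a \<noteq> 0 \<and> f (x + a) = f x} = card (f -` {f x} - {x})"
      by (metis card_image)
    then show "card {a. a \<noteq> 0 \<and> f (x + a) = f x} = N (f x) - 1"
      by (simp add: N_def card_Diff_singleton)
  qed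
  have apn2: "\<And>a. card {x. a \<noteq> 0 \<and> f (x + a) = f x} \<le> (if a \<noteq> 0 then 2 else 0)"
  proof -
    fix a :: 'a
    show "card {x. a \<noteq> 0 \<and> f (x + a) = f x} \<le> (if a \<noteq> 0 then 2 else 0)"
    proof (cases "a = 0")
      case True then show ?thesis by simp
    next
      case False
      have "{x. a \<noteq> 0 \<and> f (x + a) = f x} = {x. f (x + a) + f x = 0}"
        using False eqiff by auto
      then show ?thesis using assms(3) False unfolding APN_def by simp
    qed
  qed
  have swap: "(\<Sum>x\<in>UNIV. card {a. a \<noteq> 0 \<and> f (x + a) = f x})
      = (\<Sum>a\<in>UNIV. card {x. a \<noteq> 0 \<and> f (x + a) = f x})"
    by (simp only: card_pred_sum[OF finite_UNIV]) (rule sum.swap)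
  have "(\<Sum>a\<in>UNIV. card {x. a \<noteq> 0 \<and> f (x + a) = f x}) \<le> (\<Sum>a\<in>(UNIV::'a set). if a \<noteq> 0 then 2 else 0)"
    by (rule sum_mono) (rule apn2)
  also have "\<dots> = 2 * (Q - 1)"
  proof -
    have e: "{x::'a. x \<noteq> 0} = UNIV - {0}" by auto
    show ?thesis by (simp add: sum.If_cases Q_def e card_Diff_singleton)
  qed
  finally have S2x: "(\<Sum>x\<in>UNIV. N (f x) - 1) \<le> 2 * (Q - 1)"
    using swap fib by simp
  have grp: "\<And>h. (\<Sum>x\<in>UNIV. h (f x)) = (\<Sum>y\<in>R. N y * h y)"
  proof -
    fix h :: "'a \<Rightarrow> nat"
    have "(\<Sum>x\<in>UNIV. h (f x)) = (\<Sum>y\<in>f ` UNIV. \<Sum>x\<in>{x\<in>UNIV. f x = y}. h (f x))"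
      by (rule sum.image_gen) simp
    also have "\<dots> = (\<Sum>y\<in>R. N y * h y)"
      unfolding R_def N_def
      by (rule sum.cong) (auto simp: vimage_def)
    finally show "(\<Sum>x\<in>UNIV. h (f x)) = (\<Sum>y\<in>R. N y * h y)" .
  qed
  have S1: "(\<Sum>y\<in>R. N y) = Q"
    using grp[of "\<lambda>_. 1"] by (simp add: Q_def)
  have S2: "(\<Sum>y\<in>R. N y * (N y - 1)) \<le> 2 * (Q - 1)"
    using grp[of "\<lambda>y. N y - 1"] S2x by simp
  have Npos: "\<And>y. y \<in> R \<Longrightarrow> N y \<ge> 1"
    unfolding R_def N_def by (auto simp: Suc_le_eq card_gt_0_iff)
  have N3: "\<And>y. y \<in> R - {0} \<Longrightarrow> N y \<ge> 3"
    using assms(5) unfolding R_def N_def by auto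
  have R0: "0 \<in> R" unfolding R_def using assms(4) by (metis rangeI)
  define m where "m = N 0"
  have m1: "m \<ge> 1" using Npos R0 m_def by simp
  have I1: "(\<Sum>y\<in>R - {0}. int (N y)) = int Q - int m"
    using S1 R0 finR by (simp add: sum.remove m_def flip: of_nat_sum) 
  have I2: "(\<Sum>y\<in>R - {0}. int (N y) * (int (N y) - 1)) \<le> 2 * int Q - 2 - int m * (int m - 1)"
  proof -
    have eqS: "(\<Sum>y\<in>R. int (N y) * (int (N y) - 1)) = int (\<Sum>y\<in>R. N y * (N y - 1))"
      unfolding of_nat_sum
    proof (rule sum.cong)
      fix y assume "y \<in> R"
      then show "int (N y) * (int (N y) - 1) = int (N y * (N y - 1))"
        using Npos[of y] by (simp add: of_nat_diff)
    qed simp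
    have "N 0 \<le> (\<Sum>y\<in>R. N y)" by (rule member_le_sum[OF R0 _ finR]) simp
    then have Q1: "Q \<ge> 1" using m1 S1 m_def by simp
    have "int (\<Sum>y\<in>R. N y * (N y - 1)) \<le> int (2 * (Q - 1))" using S2 by (simp only: of_nat_le_iff)
    also have "int (2 * (Q - 1)) = 2 * int Q - 2" using Q1 by (simp add: of_nat_diff)
    finally have "int (\<Sum>y\<in>R. N y * (N y - 1)) \<le> 2 * int Q - 2" .
    then have "(\<Sum>y\<in>R. int (N y) * (int (N y) - 1)) \<le> 2 * int Q - 2"
      using eqS by simp
    then show ?thesis using R0 finR by (simp add: sum.remove m_def)
  qed
  have D: "(\<Sum>y\<in>R - {0}. int (N y) * (int (N y) - 3)) = 
      (\<Sum>y\<in>R - {0}. int (N y) * (int (N y) - 1)) - 2 * (\<Sum>y\<in>R - {0}. int (N y))"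
    by (simp add: sum_subtractf[symmetric] sum_distrib_left algebra_simps)
  have nn: "\<And>y. y \<in> R - {0} \<Longrightarrow> int (N y) * (int (N y) - 3) \<ge> 0"
    using N3 by simp
  have sum_nn: "(\<Sum>y\<in>R - {0}. int (N y) * (int (N y) - 3)) \<ge> 0"
    by (rule sum_nonneg) (rule nn)
  have key: "(int m - 1) * (int m - 2) + (\<Sum>y\<in>R - {0}. int (N y) * (int (N y) - 3)) \<le> 0"
    using D I1 I2 by (simp add: algebra_simps)
  have mm: "(int m - 1) * (int m - 2) \<ge> 0"
    using m1 by (cases "m = 1") (auto intro: mult_nonneg_nonneg)
  have sum0: "(\<Sum>y\<in>R - {0}. int (N y) * (int (N y) - 3)) = 0"
    using key mm sum_nn by linarith
  have allN3: "\<And>y. y \<in> R - {0} \<Longrightarrow> N y = 3"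
  proof -
    fix y assume y: "y \<in> R - {0}"
    have "int (N y) * (int (N y) - 3) = 0"
      using sum_nonneg_eq_0_iff[of "R - {0}" "\<lambda>y. int (N y) * (int (N y) - 3)"] finR nn sum0 y by auto
    then show "N y = 3" using N3[OF y] by simp
  qed
  have m12: "m = 1 \<or> m = 2"
  proof -
    have "(int m - 1) * (int m - 2) = 0" using key mm sum_nn by linarith
    then show ?thesis by auto
  qed
  have "int Q - int m = 3 * int (card (R - {0}))"
    using I1 allN3 by simp
  then have Qm: "Q = m + 3 * card (R - {0})" by linarith
  have "Q mod 3 = 1" using assms(1,2) mod3 Q_def by (metis evenE)
  then have m_1: "m = 1" using Qm m12 by auto
  have uniq: "\<And>y. y \<in> R \<Longrightarrow> N y = 1 \<longleftrightarrow> y = 0"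
    using allN3 m_1 m_def by fastforce
  have uniq': "\<And>y. y \<in> range f \<Longrightarrow> card (f -` {y}) = 1 \<longleftrightarrow> y = 0"
    using uniq unfolding R_def N_def .
  have all3': "\<And>y. y \<in> range f - {0} \<Longrightarrow> card (f -` {y}) = 3"
    using allN3 unfolding R_def N_def .
  have R0': "0 \<in> range f" using R0 unfolding R_def .
  show ?thesis
    unfolding almost_3_to_1_def
  proof (intro conjI ballI impI)
    show "\<exists>!y. y \<in> range f \<and> card (f -` {y}) = 1"
    proof (rule ex1I[of _ 0])
      show "0 \<in> range f \<and> card (f -` {0}) = 1" using R0' uniq' by blast
    next
      fix y assume "y \<in> range f \<and> card (f -` {y}) = 1"
      then show "y = 0" using uniq' by blast
    qed
  next
    fix y assume "y \<in> range f" "card (f -` {y}) \<noteq> 1"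
    then show "card (f -` {y}) = 3" using uniq' all3' by blast
  qed
qed

end
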